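(* For every $i\in\{1,2,3\}$, the class $\mathrm{FDir}(i)$ of D$i$-directable fuzzy automata and the class $\mathrm{CFDir}(i)$ of complete D$i$-directable fuzzy automata are closed under taking subautomata and homomorphic images. Moreover, the classes $\mathrm{CFDir}(2)$ and $\mathrm{CFDir}(3)$ are closed under finite direct products.
   Context: A fuzzy automaton is a triple $\mathcal F=(A,X,f)$ with $A$ a finite nonempty set of states, $X$ a finite nonempty alphabet, and $f:A\times X\times A\to[0,1]$, extended to words by $f^*(a,\varepsilon,a)=1$, $f^*(a,\varepsilon,b)=0$ ($b\neq a$), $f^*(a,vx,b)=\max_{c\in A}\min\{f^*(a,v,c),f(c,x,b)\}$. Let $\mathcal F(a,w)=\{b\in A\mid f^*(a,w,b)>0\}$. $\mathcal F$ is complete if $\mathcal F(a,x)\neq\emptyset$ for all $a\in A$, $x\in X$. A word $w\in X^*$ is D1-directing if there is $c\in A$ with $\mathcal F(a,w)=\{c\}$ for all $a\in A$; D2-directing if $\mathcal F(a,w)=\mathcal F(b,w)$ for all $a,b\in A$; D3-directing if there is $c\in A$ with $c\in\mathcal F(a,w)$ for all $a\in A$; $\mathcal F$ is D$i$-directable if it has a D$i$-directing word. $\mathcal G=(B,X,g)$ is a subautomaton of $\mathcal F$ if $B\subseteq A$, $\mathcal F(b,x)\subseteq B$ for all $b\in B$, $x\in X$, and $g(b,x,b')=f(b,x,b')$ for $b,b'\in B$. A surjective map $\varphi:A\to B$ is an epimorphism $\mathcal F\to\mathcal G$ if $g(\varphi(a),x,b)=\max\{f(a,x,a')\mid a'\in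 A,\ \varphi(a')=b\}$ for all $a\in A$, $b\in B$, $x\in X$ (maximum of the empty set being $0$); $\mathcal G$ is then a homomorphic image of $\mathcal F$. The direct product of $\mathcal F$ and $\mathcal G=(B,X,g)$ is $\mathcal F\times\mathcal G=(A\times B,X,h)$ with $h((a,b),x,(a',b'))=\min\{f(a,x,a'),g(b,x,b')\}$; finite direct products are obtained (up to isomorphism) by iterating this binary product. *)

theory Defs
  imports Complex_Main
begin

text \<open>A fuzzy automaton (A, X, f): A finite nonempty set of states, X finite nonempty
  alphabet, f : A \<times> X \<times> A \<rightarrow> [0,1] (values of f outside A \<times> X \<times> A are irrelevant).\<close>
definition fuzzy_automaton :: "'a set \<Rightarrow> 'x set \<Rightarrow> ('a \<Rightarrow> 'x \<Rightarrow> 'a \<Rightarrow> real) \<Rightarrow> bool" where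
  "fuzzy_automaton A X f \<longleftrightarrow> finite A \<and> A \<noteq> {} \<and> finite X \<and> X \<noteq> {} \<and>
     (\<forall>a\<in>A. \<forall>x\<in>X. \<forall>b\<in>A. 0 \<le> f a x b \<and> f a x b \<le> 1)"

fun fstar_rev :: "'a set \<Rightarrow> ('a \<Rightarrow> 'x \<Rightarrow> 'a \<Rightarrow> real) \<Rightarrow> 'a \<Rightarrow> 'x list \<Rightarrow> 'a \<Rightarrow> real" where
  "fstar_rev A f a [] b = (if a = b then 1 else 0)"
| "fstar_rev A f a (x # rv) b = Max ((\<lambda>c. min (fstar_rev A f a rv c) (f c x b)) ` A)"

definition fstar :: "'a set \<Rightarrow> ('a \<Rightarrow> 'x \<Rightarrow> 'a \<Rightarrow> real) \<Rightarrow> 'a \<Rightarrow> 'x list \<Rightarrow> 'a \<Rightarrow> real" where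
  "fstar A f a w b = fstar_rev A f a (rev w) b"

lemma fstar_Nil: "fstar A f a [] b = (if a = b then 1 else 0)"
  by (simp add: fstar_def)

lemma fstar_snoc: "fstar A f a (v @ [x]) b = Max ((\<lambda>c. min (fstar A f a v c) (f c x b)) ` A)"
  by (simp add: fstar_def)

definition reach :: "'a set \<Rightarrow> ('a \<Rightarrow> 'x \<Rightarrow> 'a \<Rightarrow> real) \<Rightarrow> 'a \<Rightarrow> 'x list \<Rightarrow> 'a set" where
  "reach A f a w = {b \<in> A. fstar A f a w b > 0}"

definition complete_fa :: "'a set \<Rightarrow> 'x set \<Rightarrow> ('a \<Rightarrow> 'x \<Rightarrow> 'a \<Rightarrow> real) \<Rightarrow> bool" where
  "complete_fa A X f \<longleftrightarrow> (\<forall>a\<in>A. \<forall>x\<in>X. reach A f a [x] \<noteq> {})"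

definition D1_directing :: "'a set \<Rightarrow> ('a \<Rightarrow> 'x \<Rightarrow> 'a \<Rightarrow> real) \<Rightarrow> 'x list \<Rightarrow> bool" where
  "D1_directing A f w \<longleftrightarrow> (\<exists>c\<in>A. \<forall>a\<in>A. reach A f a w = {c})"

definition D2_directing :: "'a set \<Rightarrow> ('a \<Rightarrow> 'x \<Rightarrow> 'a \<Rightarrow> real) \<Rightarrow> 'x list \<Rightarrow> bool" where
  "D2_directing A f w \<longleftrightarrow> (\<forall>a\<in>A. \<forall>b\<in>A. reach A f a w = reach A f b w)"

definition D3_directing :: "'a set \<Rightarrow> ('a \<Rightarrow> 'x \<Rightarrow> 'a \<Rightarrow> real) \<Rightarrow> 'x list \<Rightarrow> bool" where
  "D3_directing A f w \<longleftrightarrow> (\<exists>c\<in>A. \<forall>a\<in>A. c \<in> reach A f a w)"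

definition directing :: "nat \<Rightarrow> 'a set \<Rightarrow> ('a \<Rightarrow> 'x \<Rightarrow> 'a \<Rightarrow> real) \<Rightarrow> 'x list \<Rightarrow> bool" where
  "directing i A f w \<longleftrightarrow>
     (if i = 1 then D1_directing A f w else if i = 2 then D2_directing A f w
      else if i = 3 then D3_directing A f w else False)"

definition directable :: "nat \<Rightarrow> 'a set \<Rightarrow> 'x set \<Rightarrow> ('a \<Rightarrow> 'x \<Rightarrow> 'a \<Rightarrow> real) \<Rightarrow> bool" where
  "directable i A X f \<longleftrightarrow> (\<exists>w \<in> lists X. directing i A f w)"

definition FDir :: "nat \<Rightarrow> 'a set \<Rightarrow> 'x set \<Rightarrow> ('a \<Rightarrow> 'x \<Rightarrow> 'a \<Rightarrow> real) \<Rightarrow> bool" where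
  "FDir i A X f \<longleftrightarrow> fuzzy_automaton A X f \<and> directable i A X f"

definition CFDir :: "nat \<Rightarrow> 'a set \<Rightarrow> 'x set \<Rightarrow> ('a \<Rightarrow> 'x \<Rightarrow> 'a \<Rightarrow> real) \<Rightarrow> bool" where
  "CFDir i A X f \<longleftrightarrow> fuzzy_automaton A X f \<and> complete_fa A X f \<and> directable i A X f"

text \<open>(B,X,g) is a subautomaton of (A,X,f) (B nonempty, as (B,X,g) is a fuzzy automaton).\<close>
definition subautomaton :: "'a set \<Rightarrow> ('a \<Rightarrow> 'x \<Rightarrow> 'a \<Rightarrow> real) \<Rightarrow> 'a set \<Rightarrow> 'x set \<Rightarrow> ('a \<Rightarrow> 'x \<Rightarrow> 'a \<Rightarrow> real) \<Rightarrow> bool" where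
  "subautomaton B g A X f \<longleftrightarrow> B \<noteq> {} \<and> B \<subseteq> A \<and>
     (\<forall>b\<in>B. \<forall>x\<in>X. reach A f b [x] \<subseteq> B) \<and>
     (\<forall>b\<in>B. \<forall>x\<in>X. \<forall>b'\<in>B. g b x b' = f b x b')"

definition epimorphism :: "('a \<Rightarrow> 'b) \<Rightarrow> 'a set \<Rightarrow> 'x set \<Rightarrow> ('a \<Rightarrow> 'x \<Rightarrow> 'a \<Rightarrow> real) \<Rightarrow> 'b set \<Rightarrow> ('b \<Rightarrow> 'x \<Rightarrow> 'b \<Rightarrow> real) \<Rightarrow> bool" where
  "epimorphism \<phi> A X f B g \<longleftrightarrow> \<phi> ` A = B \<and>
     (\<forall>a\<in>A. \<forall>b\<in>B. \<forall>x\<in>X.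
        g (\<phi> a) x b = (let S = {f a x a' | a'. a' \<in> A \<and> \<phi> a' = b} in if S = {} then 0 else Max S))"

definition homomorphic_image :: "'b set \<Rightarrow> ('b \<Rightarrow> 'x \<Rightarrow> 'b \<Rightarrow> real) \<Rightarrow> 'a set \<Rightarrow> 'x set \<Rightarrow> ('a \<Rightarrow> 'x \<Rightarrow> 'a \<Rightarrow> real) \<Rightarrow> bool" where
  "homomorphic_image B g A X f \<longleftrightarrow> (\<exists>\<phi>. epimorphism \<phi> A X f B g)"

definition prod_trans :: "('a \<Rightarrow> 'x \<Rightarrow> 'a \<Rightarrow> real) \<Rightarrow> ('b \<Rightarrow> 'x \<Rightarrow> 'b \<Rightarrow> real) \<Rightarrow> ('a \<times> 'b) \<Rightarrow> 'x \<Rightarrow> ('a \<times> 'b) \<Rightarrow> real" where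
  "prod_trans f g p x q = min (f (fst p) x (fst q)) (g (snd p) x (snd q))"

end

theory Submission
  imports Defs
begin

lemma reach_subset: "reach A f a w \<subseteq> A" by (auto simp: reach_def)

lemma reach_Nil: "a \<in> A \<Longrightarrow> reach A f a [] = {a}" by (auto simp: reach_def fstar_Nil)

lemma reach_snoc:
  assumes "finite A" "A \<noteq> {}"
  shows "reach A f a (v@[x]) = (\<Union>c\<in>reach A f a v. {b\<in>A. f c x b > 0})"
proof -
  have "b\<in>A \<Longrightarrow> (0 < Max ((\<lambda>c. min (fstar A f a v c) (f c x b)) ` A)) \<longleftrightarrow> (\<exists>c\<in>A. 0 < fstar A f a v c \<and> 0 < f c x b)" for b
    using assms by (simp add: Max_gr_iff)
  then show ?thesis by (auto simp: reach_def fstar_snoc)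
qed

lemma reach_single:
  assumes "finite A" "A \<noteq> {}" "a \<in> A"
  shows "reach A f a [x] = {b\<in>A. f a x b > 0}"
  using reach_snoc[OF assms(1,2), of f a "[]" x] by (simp add: reach_Nil[OF assms(3)])

lemma reach_append:
  assumes "finite A" "A \<noteq> {}"
  shows "reach A f a (u@v) = (\<Union>c\<in>reach A f a u. reach A f c v)"
proof (induction v rule: rev_induct)
  case Nil
  have "reach A f c [] = {c}" if "c \<in> reach A f a u" for c
    using that reach_subset[of A f a u] by (auto intro!: reach_Nil)
  then show ?case by auto
next
  case (snoc x v)
  have "reach A f a (u @ v @ [x]) = (\<Union>d\<in>reach A f a (u@v). {b\<in>A. f d x b > 0})"
    using reach_snoc[OF assms, of f a "u@v" x] by simp
  also have "\<dots> = (\<Union>c\<in>reach A f a u. \<Union>d\<in>reach A f c v. {b\<in>A. f d x b > 0})"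
    using snoc by auto
  also have "\<dots> = (\<Union>c\<in>reach A f a u. reach A f c (v@[x]))"
    by (simp add: reach_snoc[OF assms])
  finally show ?case by simp
qed

lemma reach_nonempty:
  assumes "fuzzy_automaton A X f" "complete_fa A X f" "a \<in> A" "w \<in> lists X"
  shows "reach A f a w \<noteq> {}"
  using assms(4)
proof (induction w rule: rev_induct)
  case Nil
  then show ?case by (simp add: reach_Nil[OF assms(3)])
next
  case (snoc x v)
  have fin: "finite A" "A \<noteq> {}" using assms(1) by (auto simp: fuzzy_automaton_def)
  from snoc obtain c where c: "c \<in> reach A f a v" by auto
  then have cA: "c \<in> A" using reach_subset by fast
  have "x \<in> X" using snoc by simp
  then have "reach A f c [x] \<noteq> {}" using assms(2) cA by (auto simp: complete_fa_def)
  then show ?case using c reach_append[OF fin, of f a v "[x]"] by auto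
qed

lemma sub_reach:
  assumes "subautomaton B g A X f" "fuzzy_automaton A X f" "b \<in> B" "w \<in> lists X"
  shows "reach B g b w = reach A f b w"
  using assms(4)
proof (induction w rule: rev_induct)
  case Nil
  have "b \<in> A" using assms(1,3) by (auto simp: subautomaton_def)
  then show ?case using reach_Nil assms(3) by metis
next
  case (snoc x v)
  have finA: "finite A" "A \<noteq> {}" using assms(2) by (auto simp: fuzzy_automaton_def)
  have BA: "B \<subseteq> A" "B \<noteq> {}" using assms(1) by (auto simp: subautomaton_def)
  have finB: "finite B" using finA BA finite_subset by blast
  have x: "x \<in> X" using snoc by simp
  have IH: "reach B g b v = reach A f b v" using snoc by simp
  have RB: "reach A f b v \<subseteq> B" using IH reach_subset by metis
  have eq: "{b'\<in>B. g c x b' > 0} = {b'\<in>A. f c x b' > 0}" if "c \<in> B" for c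
  proof -
    have "reach A f c [x] \<subseteq> B" using assms(1) that x by (auto simp: subautomaton_def)
    moreover have "c \<in> A" using that BA by auto
    ultimately have "{b'\<in>A. f c x b' > 0} \<subseteq> B" using reach_single[OF finA, of c f x] by simp
    moreover have "\<forall>b'\<in>B. g c x b' = f c x b'" using assms(1) that x by (auto simp: subautomaton_def)
    ultimately show ?thesis using BA by auto
  qed
  have "reach B g b (v@[x]) = (\<Union>c\<in>reach A f b v. {b'\<in>B. g c x b' > 0})"
    unfolding reach_snoc[OF finB BA(2)] IH ..
  also have "\<dots> = (\<Union>c\<in>reach A f b v. {b'\<in>A. f c x b' > 0})"
    using eq RB by (intro SUP_cong) auto
  also have "\<dots> = reach A f b (v@[x])" using reach_snoc[OF finA, of f b v x] by simp
  finally show ?case .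
qed

lemma sub_fa:
  assumes "subautomaton B g A X f" "fuzzy_automaton A X f"
  shows "fuzzy_automaton B X g"
  using assms unfolding subautomaton_def fuzzy_automaton_def
  by (metis finite_subset subsetD)

lemma sub_complete:
  assumes "subautomaton B g A X f" "fuzzy_automaton A X f" "complete_fa A X f"
  shows "complete_fa B X g"
  unfolding complete_fa_def
proof (intro ballI)
  fix b x assume b: "b \<in> B" and x: "x \<in> X"
  have "b \<in> A" using assms(1) b by (auto simp: subautomaton_def)
  then have "reach A f b [x] \<noteq> {}" using assms(3) x by (auto simp: complete_fa_def)
  moreover have "[x] \<in> lists X" using x by simp
  ultimately show "reach B g b [x] \<noteq> {}" using sub_reach[OF assms(1,2) b] by simp
qed

lemma sub_dir:
  assumes "subautomaton B g A X f" "fuzzy_automaton A X f" "i \<in> {1,2,3}"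
    "directable i A X f"
  shows "directable i B X g"
proof -
  obtain w where w: "w \<in> lists X" "directing i A f w" using assms(4) by (auto simp: directable_def)
  have R: "\<And>b. b \<in> B \<Longrightarrow> reach B g b w = reach A f b w" using sub_reach[OF assms(1,2) _ w(1)] .
  have BA: "B \<subseteq> A" "B \<noteq> {}" using assms(1) by (auto simp: subautomaton_def)
  then obtain b0 where b0: "b0 \<in> B" by auto
  have "directing i B g w"
  proof -
    consider "i = 1" | "i = 2" | "i = 3" using assms(3) by auto
    then show ?thesis
    proof cases
      case 1
      then obtain c where c: "\<forall>a\<in>A. reach A f a w = {c}" using w(2) by (auto simp: directing_def D1_directing_def)
      have "c \<in> B" using R[OF b0] c b0 BA reach_subset[of B g b0 w] by auto
      then have "D1_directing B g w" unfolding D1_directing_def using c R BA by (metis subsetD)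
      then show ?thesis using 1 by (simp add: directing_def)
    next
      case 2
      then have "D2_directing A f w" using w(2) by (simp add: directing_def)
      then have "D2_directing B g w" using R BA unfolding D2_directing_def by (metis subsetD)
      then show ?thesis using 2 by (simp add: directing_def)
    next
      case 3
      then obtain c where c: "\<forall>a\<in>A. c \<in> reach A f a w" using w(2) by (auto simp: directing_def D3_directing_def)
      have "c \<in> B" using R[OF b0] c b0 BA reach_subset[of B g b0 w] by auto
      then have "D3_directing B g w" unfolding D3_directing_def using c R BA by (metis subsetD)
      then show ?thesis using 3 by (simp add: directing_def)
    qed
  qed
  then show ?thesis using w(1) by (auto simp: directable_def)
qed


lemma hom_val:
  assumes "epimorphism \<phi> A X f B g" "fuzzy_automaton A X f" "a \<in> A" "x \<in> X" "b \<in> B"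
  shows "g (\<phi> a) x b = Max ((\<lambda>a'. f a x a') ` {a'\<in>A. \<phi> a' = b})"
    "finite {a'\<in>A. \<phi> a' = b}" "{a'\<in>A. \<phi> a' = b} \<noteq> {}"
proof -
  have S: "{f a x a' | a'. a' \<in> A \<and> \<phi> a' = b} = (\<lambda>a'. f a x a') ` {a'\<in>A. \<phi> a' = b}" by auto
  show ne: "{a'\<in>A. \<phi> a' = b} \<noteq> {}" using assms(1,5) by (auto simp: epimorphism_def)
  show "finite {a'\<in>A. \<phi> a' = b}" using assms(2) by (auto simp: fuzzy_automaton_def)
  show "g (\<phi> a) x b = Max ((\<lambda>a'. f a x a') ` {a'\<in>A. \<phi> a' = b})"
  proof -
    have E: "g (\<phi> a) x b = (let S = {f a x a' | a'. a' \<in> A \<and> \<phi> a' = b} in if S = {} then 0 else Max S)"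
      using assms(1,3,4,5) unfolding epimorphism_def by blast
    show ?thesis using E ne unfolding Let_def S by auto
  qed
qed

lemma hom_delta:
  assumes "epimorphism \<phi> A X f B g" "fuzzy_automaton A X f" "a \<in> A" "x \<in> X"
  shows "{b\<in>B. g (\<phi> a) x b > 0} = \<phi> ` {a'\<in>A. f a x a' > 0}"
proof -
  have B: "B = \<phi> ` A" using assms(1) by (auto simp: epimorphism_def)
  have H: "b \<in> B \<Longrightarrow> g (\<phi> a) x b > 0 \<longleftrightarrow> (\<exists>a'\<in>A. \<phi> a' = b \<and> f a x a' > 0)" for b
    using hom_val[OF assms _] by (auto simp: Max_gr_iff)
  show ?thesis
  proof (rule set_eqI)
    fix b
    show "b \<in> {b\<in>B. g (\<phi> a) x b > 0} \<longleftrightarrow> b \<in> \<phi> ` {a'\<in>A. f a x a' > 0}"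
    proof
      assume "b \<in> {b\<in>B. g (\<phi> a) x b > 0}"
      then obtain a' where "a' \<in> A" "\<phi> a' = b" "f a x a' > 0" using H by auto
      then show "b \<in> \<phi> ` {a'\<in>A. f a x a' > 0}" by (auto intro: image_eqI)
    next
      assume "b \<in> \<phi> ` {a'\<in>A. f a x a' > 0}"
      then obtain a' where a': "a' \<in> A" "f a x a' > 0" "b = \<phi> a'" by auto
      then have "b \<in> B" using B by auto
      then show "b \<in> {b\<in>B. g (\<phi> a) x b > 0}" using H a' by auto
    qed
  qed
qed

lemma hom_reach:
  assumes "epimorphism \<phi> A X f B g" "fuzzy_automaton A X f" "a \<in> A" "w \<in> lists X"
  shows "reach B g (\<phi> a) w = \<phi> ` reach A f a w"
  using assms(4)
proof (induction w rule: rev_induct)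
  case Nil
  have "\<phi> a \<in> B" using assms(1,3) by (auto simp: epimorphism_def)
  then show ?case by (simp add: reach_Nil assms(3))
next
  case (snoc x v)
  have finA: "finite A" "A \<noteq> {}" using assms(2) by (auto simp: fuzzy_automaton_def)
  have B: "B = \<phi> ` A" using assms(1) by (auto simp: epimorphism_def)
  have finB: "finite B" "B \<noteq> {}" using B finA by auto
  have x: "x \<in> X" using snoc by simp
  have IH: "reach B g (\<phi> a) v = \<phi> ` reach A f a v" using snoc by simp
  have "reach B g (\<phi> a) (v@[x]) = (\<Union>d\<in>\<phi> ` reach A f a v. {b\<in>B. g d x b > 0})"
    unfolding reach_snoc[OF finB] IH ..
  also have "\<dots> = (\<Union>c\<in>reach A f a v. \<phi> ` {a'\<in>A. f c x a' > 0})"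
    using hom_delta[OF assms(1,2) _ x] reach_subset[of A f a v] by auto
  also have "\<dots> = \<phi> ` reach A f a (v@[x])" using reach_snoc[OF finA, of f a v x] by auto
  finally show ?case .
qed

lemma hom_fa:
  assumes "epimorphism \<phi> A X f B g" "fuzzy_automaton A X f"
  shows "fuzzy_automaton B X g"
proof -
  have B: "B = \<phi> ` A" using assms(1) by (auto simp: epimorphism_def)
  have "0 \<le> g b1 x b \<and> g b1 x b \<le> 1" if T: "b1 \<in> B" "x \<in> X" "b \<in> B" for b1 x b
  proof -
    obtain a where a: "a \<in> A" "b1 = \<phi> a" using B T(1) by auto
    note h = hom_val[OF assms a(1) T(2,3)]
    have "Max ((\<lambda>a'. f a x a') ` {a'\<in>A. \<phi> a' = b}) \<in> (\<lambda>a'. f a x a') ` {a'\<in>A. \<phi> a' = b}"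
      using h by (intro Max_in) auto
    then show ?thesis using h(1) a assms(2) T(2) by (auto simp: fuzzy_automaton_def)
  qed
  then show ?thesis using assms(2) B by (auto simp: fuzzy_automaton_def)
qed

lemma hom_complete:
  assumes "epimorphism \<phi> A X f B g" "fuzzy_automaton A X f" "complete_fa A X f"
  shows "complete_fa B X g"
proof -
  have B: "B = \<phi> ` A" using assms(1) by (auto simp: epimorphism_def)
  show ?thesis unfolding complete_fa_def
  proof (intro ballI)
    fix b x assume "b \<in> B" "x \<in> X"
    then obtain a where "a \<in> A" "b = \<phi> a" using B by auto
    then show "reach B g b [x] \<noteq> {}"
      using hom_reach[OF assms(1,2), of a "[x]"] assms(3) \<open>x \<in> X\<close> by (auto simp: complete_fa_def)
  qed
qed

lemma hom_dir:
  assumes "epimorphism \<phi> A X f B g" "fuzzy_automaton A X f" "i \<in> {1,2,3}"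
    "directable i A X f"
  shows "directable i B X g"
proof -
  obtain w where w: "w \<in> lists X" "directing i A f w" using assms(4) by (auto simp: directable_def)
  have R: "\<And>a. a \<in> A \<Longrightarrow> reach B g (\<phi> a) w = \<phi> ` reach A f a w" using hom_reach[OF assms(1,2) _ w(1)] .
  have B: "B = \<phi> ` A" using assms(1) by (auto simp: epimorphism_def)
  have "directing i B g w"
  proof -
    consider "i = 1" | "i = 2" | "i = 3" using assms(3) by auto
    then show ?thesis
    proof cases
      case 1
      then obtain c where c: "c \<in> A" "\<forall>a\<in>A. reach A f a w = {c}" using w(2) by (auto simp: directing_def D1_directing_def)
      have "D1_directing B g w" unfolding D1_directing_def
        by (rule bexI[of _ "\<phi> c"]) (use c R B in auto)
      then show ?thesis using 1 by (simp add: directing_def)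
    next
      case 2
      then have dA: "D2_directing A f w" using w(2) by (simp add: directing_def)
      have "D2_directing B g w" unfolding D2_directing_def
      proof (intro ballI)
        fix b1 b2 assume "b1 \<in> B" "b2 \<in> B"
        then obtain a1 a2 where "a1 \<in> A" "a2 \<in> A" "b1 = \<phi> a1" "b2 = \<phi> a2" using B by auto
        then show "reach B g b1 w = reach B g b2 w" using R dA unfolding D2_directing_def by metis
      qed
      then show ?thesis using 2 by (simp add: directing_def)
    next
      case 3
      then obtain c where c: "c \<in> A" "\<forall>a\<in>A. c \<in> reach A f a w" using w(2) by (auto simp: directing_def D3_directing_def)
      have "D3_directing B g w" unfolding D3_directing_def
        by (rule bexI[of _ "\<phi> c"]) (use c R B in auto)
      then show ?thesis using 3 by (simp add: directing_def)
    qed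
  qed
  then show ?thesis using w(1) by (auto simp: directable_def)
qed


lemma prod_fa:
  assumes "fuzzy_automaton A X f" "fuzzy_automaton B X g"
  shows "fuzzy_automaton (A \<times> B) X (prod_trans f g)"
  using assms unfolding fuzzy_automaton_def prod_trans_def by (auto simp: min_def)

lemma prod_reach:
  assumes "fuzzy_automaton A X f" "fuzzy_automaton B X g" "a \<in> A" "b \<in> B"
  shows "reach (A \<times> B) (prod_trans f g) (a,b) w = reach A f a w \<times> reach B g b w"
proof (induction w rule: rev_induct)
  case Nil
  then show ?case using assms by (simp add: reach_Nil)
next
  case (snoc x v)
  have finA: "finite A" "A \<noteq> {}" using assms(1) by (auto simp: fuzzy_automaton_def)
  have finB: "finite B" "B \<noteq> {}" using assms(2) by (auto simp: fuzzy_automaton_def)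
  have finP: "finite (A \<times> B)" "A \<times> B \<noteq> {}" using finA finB by auto
  have "reach (A \<times> B) (prod_trans f g) (a,b) (v@[x]) =
     (\<Union>p\<in>reach A f a v \<times> reach B g b v. {q\<in>A \<times> B. prod_trans f g p x q > 0})"
    unfolding reach_snoc[OF finP] snoc ..
  also have "\<dots> = (\<Union>c\<in>reach A f a v. {q\<in>A. f c x q > 0}) \<times> (\<Union>d\<in>reach B g b v. {q\<in>B. g d x q > 0})"
    unfolding prod_trans_def by auto
  also have "\<dots> = reach A f a (v@[x]) \<times> reach B g b (v@[x])"
    using reach_snoc[OF finA, of f a v x] reach_snoc[OF finB, of g b v x] by simp
  finally show ?case .
qed

lemma prod_complete:
  assumes "fuzzy_automaton A X f" "fuzzy_automaton B X g" "complete_fa A X f" "complete_fa B X g"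
  shows "complete_fa (A \<times> B) X (prod_trans f g)"
  unfolding complete_fa_def
proof (intro ballI)
  fix p x assume p: "p \<in> A \<times> B" and x: "x \<in> X"
  obtain a b where ab: "p = (a,b)" "a \<in> A" "b \<in> B" using p by auto
  show "reach (A \<times> B) (prod_trans f g) p [x] \<noteq> {}"
    using prod_reach[OF assms(1,2) ab(2,3), of "[x]"] assms(3,4) ab x by (auto simp: complete_fa_def)
qed

lemma D2_ext:
  assumes "fuzzy_automaton A X f" "complete_fa A X f" "u \<in> lists X" "D2_directing A f w"
  shows "D2_directing A f (u@w@v)"
proof -
  have finA: "finite A" "A \<noteq> {}" using assms(1) by (auto simp: fuzzy_automaton_def)
  then obtain a0 where a0: "a0 \<in> A" by auto
  have K: "reach A f c (w@v) = reach A f a0 (w@v)" if "c \<in> A" for c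
    using assms(4) that a0 unfolding D2_directing_def reach_append[OF finA] by metis
  have "reach A f a (u@w@v) = reach A f a0 (w@v)" if "a \<in> A" for a
  proof -
    have "reach A f a (u@(w@v)) = (\<Union>c\<in>reach A f a u. reach A f c (w@v))" by (rule reach_append[OF finA])
    also have "\<dots> = (\<Union>c\<in>reach A f a u. reach A f a0 (w@v))"
      using K reach_subset[of A f a u] by (intro SUP_cong) auto
    also have "\<dots> = reach A f a0 (w@v)" using reach_nonempty[OF assms(1,2) that assms(3)] by simp
    finally show ?thesis by simp
  qed
  then show ?thesis unfolding D2_directing_def by simp
qed

lemma D3_ext:
  assumes "fuzzy_automaton A X f" "complete_fa A X f" "u \<in> lists X" "v \<in> lists X" "D3_directing A f w"
  shows "D3_directing A f (u@w@v)"
proof -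
  have finA: "finite A" "A \<noteq> {}" using assms(1) by (auto simp: fuzzy_automaton_def)
  obtain c0 where c0: "c0 \<in> A" "\<forall>a\<in>A. c0 \<in> reach A f a w" using assms(5) by (auto simp: D3_directing_def)
  obtain d where d: "d \<in> reach A f c0 v" using reach_nonempty[OF assms(1,2) c0(1) assms(4)] by auto
  have dA: "d \<in> A" using d reach_subset by fast
  have "d \<in> reach A f a (u@w@v)" if aA: "a \<in> A" for a
  proof -
    obtain e where e: "e \<in> reach A f a u" using reach_nonempty[OF assms(1,2) aA assms(3)] by auto
    have eA: "e \<in> A" using e reach_subset by fast
    have "d \<in> reach A f e (w@v)" using c0 eA d unfolding reach_append[OF finA] by blast
    then show ?thesis using e unfolding reach_append[OF finA, of f a u "w@v"] by blast
  qed
  then show ?thesis using dA unfolding D3_directing_def by blast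
qed

lemma prod_dir:
  assumes "i \<in> {2,3}" "CFDir i A X f" "CFDir i B X g"
  shows "directable i (A \<times> B) X (prod_trans f g)"
proof -
  have fa: "fuzzy_automaton A X f" "complete_fa A X f" "fuzzy_automaton B X g" "complete_fa B X g"
    using assms by (auto simp: CFDir_def)
  obtain w1 where w1: "w1 \<in> lists X" "directing i A f w1" using assms(2) by (auto simp: CFDir_def directable_def)
  obtain w2 where w2: "w2 \<in> lists X" "directing i B g w2" using assms(3) by (auto simp: CFDir_def directable_def)
  have R: "\<And>a b. a \<in> A \<Longrightarrow> b \<in> B \<Longrightarrow> reach (A \<times> B) (prod_trans f g) (a,b) (w1@w2) = reach A f a (w1@w2) \<times> reach B g b (w1@w2)"
    using prod_reach[OF fa(1,3)] by blast
  have "directing i (A \<times> B) (prod_trans f g) (w1@w2)"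
  proof -
    show ?thesis
    proof (cases "i = 2")
      case True
      note i2 = True
      have d1: "D2_directing A f w1" using w1(2) i2 by (simp add: directing_def)
      have d2: "D2_directing B g w2" using w2(2) i2 by (simp add: directing_def)
      have dA: "D2_directing A f ([]@w1@w2)" using D2_ext[OF fa(1,2) _ d1, where u="[]" and v=w2] by simp
      have dB: "D2_directing B g (w1@w2@[])" using D2_ext[OF fa(3,4) w1(1) d2, where v="[]"] by simp
      have "D2_directing (A \<times> B) (prod_trans f g) (w1@w2)"
        unfolding D2_directing_def
      proof (intro ballI)
        fix p q assume "p \<in> A \<times> B" "q \<in> A \<times> B"
        then obtain a b a' b' where pq: "p = (a,b)" "q = (a',b')" and ab: "a \<in> A" "b \<in> B" "a' \<in> A" "b' \<in> B" by auto
        have dA': "D2_directing A f (w1@w2)" using dA by simp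
        have dB': "D2_directing B g (w1@w2)" using dB by simp
        have e1: "reach A f a (w1@w2) = reach A f a' (w1@w2)" using dA' ab(1,3) unfolding D2_directing_def by blast
        have e2: "reach B g b (w1@w2) = reach B g b' (w1@w2)" using dB' ab(2,4) unfolding D2_directing_def by blast
        show "reach (A \<times> B) (prod_trans f g) p (w1@w2) = reach (A \<times> B) (prod_trans f g) q (w1@w2)"
          unfolding pq R[OF ab(1,2)] R[OF ab(3,4)] e1 e2 ..
      qed
      then show ?thesis using i2 by (simp add: directing_def)
    next
      case False
      then have i3: "i = 3" using assms(1) by auto
      have d1: "D3_directing A f w1" using w1(2) i3 by (simp add: directing_def)
      have d2: "D3_directing B g w2" using w2(2) i3 by (simp add: directing_def)
      have dA: "D3_directing A f ([]@w1@w2)" using D3_ext[OF fa(1,2) _ w2(1) d1, where u="[]"] by simp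
      have dB: "D3_directing B g (w1@w2@[])" using D3_ext[OF fa(3,4) w1(1) _ d2, where v="[]"] by simp
      obtain cA where cA: "cA \<in> A" "\<forall>a\<in>A. cA \<in> reach A f a (w1@w2)" using dA by (auto simp: D3_directing_def)
      obtain cB where cB: "cB \<in> B" "\<forall>b\<in>B. cB \<in> reach B g b (w1@w2)" using dB by (auto simp: D3_directing_def)
      have "D3_directing (A \<times> B) (prod_trans f g) (w1@w2)"
        unfolding D3_directing_def
        by (rule bexI[of _ "(cA,cB)"]) (use cA cB R in auto)
      then show ?thesis using i3 by (simp add: directing_def)
    qed
  qed
  moreover have "w1 @ w2 \<in> lists X" using w1(1) w2(1) by simp
  ultimately show ?thesis unfolding directable_def by blast
qed

theorem proposition6p11:
  fixes A :: "'a set" and X :: "'x set" and f :: "'a \<Rightarrow> 'x \<Rightarrow> 'a \<Rightarrow> real"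
    and i :: nat
  assumes "i \<in> {1, 2, 3}"
  shows
    "(\<forall>B g. FDir i A X f \<and> subautomaton B g A X f \<longrightarrow> FDir i B X g)
   \<and> (\<forall>B g. CFDir i A X f \<and> subautomaton B g A X f \<longrightarrow> CFDir i B X g)
   \<and> (\<forall>(B :: 'b set) g. FDir i A X f \<and> homomorphic_image B g A X f \<longrightarrow> FDir i B X g)
   \<and> (\<forall>(B :: 'b set) g. CFDir i A X f \<and> homomorphic_image B g A X f \<longrightarrow> CFDir i B X g)
   \<and> (i \<in> {2, 3} \<longrightarrow> (\<forall>(B :: 'b set) g. CFDir i A X f \<and> CFDir i B X g
          \<longrightarrow> CFDir i (A \<times> B) X (prod_trans f g)))"
proof (intro conjI allI impI)
  fix B g assume H: "FDir i A X f \<and> subautomaton B g A X f"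
  then have F: "fuzzy_automaton A X f" "directable i A X f" "subautomaton B g A X f" by (auto simp: FDir_def)
  show "FDir i B X g" unfolding FDir_def using sub_fa[OF F(3,1)] sub_dir[OF F(3,1) assms F(2)] by simp
next
  fix B g assume H: "CFDir i A X f \<and> subautomaton B g A X f"
  then have F: "fuzzy_automaton A X f" "directable i A X f" "subautomaton B g A X f" "complete_fa A X f" by (auto simp: CFDir_def)
  show "CFDir i B X g" unfolding CFDir_def
    using sub_fa[OF F(3,1)] sub_dir[OF F(3,1) assms F(2)] sub_complete[OF F(3,1,4)] by simp
next
  fix B :: "'b set" and g assume H: "FDir i A X f \<and> homomorphic_image B g A X f"
  then obtain \<phi> where E: "epimorphism \<phi> A X f B g" by (auto simp: homomorphic_image_def)
  have F: "fuzzy_automaton A X f" "directable i A X f" using H by (auto simp: FDir_def)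
  show "FDir i B X g" unfolding FDir_def using hom_fa[OF E F(1)] hom_dir[OF E F(1) assms F(2)] by simp
next
  fix B :: "'b set" and g assume H: "CFDir i A X f \<and> homomorphic_image B g A X f"
  then obtain \<phi> where E: "epimorphism \<phi> A X f B g" by (auto simp: homomorphic_image_def)
  have F: "fuzzy_automaton A X f" "directable i A X f" "complete_fa A X f" using H by (auto simp: CFDir_def)
  show "CFDir i B X g" unfolding CFDir_def
    using hom_fa[OF E F(1)] hom_dir[OF E F(1) assms F(2)] hom_complete[OF E F(1,3)] by simp
next
  fix B :: "'b set" and g assume i: "i \<in> {2,3}" and H: "CFDir i A X f \<and> CFDir i B X g"
  have F: "fuzzy_automaton A X f" "complete_fa A X f" "fuzzy_automaton B X g" "complete_fa B X g"
    using H by (auto simp: CFDir_def)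
  show "CFDir i (A \<times> B) X (prod_trans f g)" unfolding CFDir_def
    using prod_fa[OF F(1,3)] prod_complete[OF F(1,3,2,4)] prod_dir[OF i conjunct1[OF H] conjunct2[OF H]] by simp
qed

end
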